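(* There is an absolute constant $C>0$ with the following property. Let $\epsilon\in(0,1/2]$ with $1/\epsilon$ an integer, and let $\delta\in(0,1/2)$. Let $s\ge C\epsilon^{-1}\ln(1/(\epsilon\delta))$ be an integer. Let $t\ge 1$ and let $x=(x_1,\dots,x_t)$ be a vector of positive weights, where item $i$ has weight $x_i$. Let $S\subseteq[t]$ be a weighted random sample without replacement of size $\min\{t,s\}$ from the items $1,\dots,t$ with weights $x_1,\dots,x_t$. Let $$T=\{i\in[t]: x_i\ge\epsilon\|x_{\mathrm{tail}(1/\epsilon)}\|_1\}.$$ Then: - $|T|\le 2/\epsilon$; - $\Pr[T\subseteq S]\ge 1-\delta$; - whenever $T\subseteq S$, the $\min\{|S|,2/\epsilon\}$ elements of $S$ with largest weights, ties broken arbitrarily, contain $T$.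
   Context: For $x\in\mathbb{R}^t$ and an integer $m\ge 0$, $x_{\mathrm{tail}(m)}$ is the vector equal to $x$ except that its $m$ largest coordinates (in absolute value, ties broken arbitrarily) are set to $0$. **Weighted sampling without replacement.** A single weighted random sample from a finite collection of items with positive weights is one item, where an item of weight $w$ is chosen with probability $w$ divided by the total weight. A weighted random sample without replacement of size $m$ is produced as follows: start with $S=\emptyset$; for $i=1,\dots,m$, draw a single weighted random sample from the items not yet in $S$ and add it to $S$. *)

theory Defs
  imports "HOL-Probability.Probability"
begin

definition wsample :: "(nat \<Rightarrow> real) \<Rightarrow> nat set \<Rightarrow> nat pmf" where
  "wsample x B = embed_pmf (\<lambda>i. if i \<in> B then x i / (\<Sum>j\<in>B. x j) else 0)"

fun wswor :: "(nat \<Rightarrow> real) \<Rightarrow> nat set \<Rightarrow> nat \<Rightarrow> nat set pmf" where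
  "wswor x A 0 = return_pmf {}"
| "wswor x A (Suc m) =
     bind_pmf (wswor x A m) (\<lambda>S. map_pmf (\<lambda>i. insert i S) (wsample x (A - S)))"

definition is_top :: "(nat \<Rightarrow> real) \<Rightarrow> nat set \<Rightarrow> nat \<Rightarrow> nat set \<Rightarrow> bool" where
  "is_top x I m R \<longleftrightarrow> R \<subseteq> I \<and> card R = min m (card I) \<and>
      (\<forall>i\<in>R. \<forall>j\<in>I - R. \<bar>x j\<bar> \<le> \<bar>x i\<bar>)"

definition tail_l1 :: "(nat \<Rightarrow> real) \<Rightarrow> nat set \<Rightarrow> nat \<Rightarrow> real" where
  "tail_l1 x I m = (\<Sum>i\<in>I - (SOME R. is_top x I m R). \<bar>x i\<bar>)"

end

theory Submission
  imports Defs
begin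


lemma top_exists:
  assumes "finite I" shows "\<exists>R. is_top x I m R"
proof (induction m)
  case 0 show ?case by (rule exI[of _ "{}"]) (simp add: is_top_def)
next
  case (Suc m)
  then obtain R where R: "is_top x I m R" by blast
  have RI: "R \<subseteq> I" and cR: "card R = min m (card I)"
    and ord: "\<forall>i\<in>R. \<forall>j\<in>I - R. \<bar>x j\<bar> \<le> \<bar>x i\<bar>" using R by (auto simp: is_top_def)
  have fR: "finite R" using RI assms finite_subset by blast
  show ?case
  proof (cases "card R < card I")
    case True
    have ne: "I - R \<noteq> {}"
    proof
      assume "I - R = {}" then have "I \<subseteq> R" by blast
      then have "card I \<le> card R" using fR card_mono by blast
      with True show False by simp
    qed
    have fin: "finite (I - R)" using assms by simp
    let ?f = "\<lambda>j. \<bar>x j\<bar>"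
    have "Max (?f ` (I - R)) \<in> ?f ` (I - R)" using fin ne by (intro Max_in) auto
    then obtain j where j: "j \<in> I - R" "?f j = Max (?f ` (I - R))" by auto
    have jmax: "\<forall>y\<in>I - R. ?f y \<le> ?f j" using j fin by auto
    have cm: "card R = m" using cR True by simp
    show ?thesis
    proof (rule exI[of _ "insert j R"], unfold is_top_def, intro conjI)
      show "insert j R \<subseteq> I" using RI j by auto
      show "card (insert j R) = min (Suc m) (card I)" using fR j cm True by simp
      show "\<forall>i\<in>insert j R. \<forall>j'\<in>I - insert j R. \<bar>x j'\<bar> \<le> \<bar>x i\<bar>"
        using ord jmax by auto
    qed
  next
    case False
    then have "card R = card I" using RI assms card_mono by (metis le_antisym not_less)
    then have RI': "R = I" using RI assms card_subset_eq by blast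
    show ?thesis
      by (rule exI[of _ R]) (use RI' cR \<open>card R = card I\<close> in \<open>auto simp: is_top_def\<close>)
  qed
qed


lemma wsample_pmf:
  assumes fB: "finite B" and ne: "B \<noteq> {}" and pB: "\<forall>j\<in>B. x j > 0"
  shows "pmf (wsample x B) j = (if j \<in> B then x j / (\<Sum>i\<in>B. x i) else 0)"
proof -
  define W where "W = (\<Sum>i\<in>B. x i)"
  have Wp: "W > 0" unfolding W_def using fB ne pB by (intro sum_pos) auto
  define f where "f = (\<lambda>i. if i \<in> B then x i / W else 0)"
  have nn: "\<And>i. 0 \<le> f i" using pB Wp by (auto simp: f_def)
  have "(\<integral>\<^sup>+i. ennreal (f i) \<partial>count_space UNIV) = (\<integral>\<^sup>+i. ennreal (x i / W) * indicator B i \<partial>count_space UNIV)"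
    by (intro nn_integral_cong) (auto simp: f_def split: split_indicator)
  also have "\<dots> = (\<integral>\<^sup>+i. ennreal (x i / W) \<partial>count_space B)"
    by (rule nn_integral_count_space_indicator[symmetric]) (simp add: NO_MATCH_def)
  also have "\<dots> = (\<Sum>i\<in>B. ennreal (x i / W))" using fB by (rule nn_integral_count_space_finite)
  also have "\<dots> = ennreal (\<Sum>i\<in>B. x i / W)" using pB Wp by (intro sum_ennreal) auto
  also have "(\<Sum>i\<in>B. x i / W) = 1" using Wp by (simp add: sum_divide_distrib[symmetric] W_def)
  finally have prob: "(\<integral>\<^sup>+i. ennreal (f i) \<partial>count_space UNIV) = 1" by simp
  show ?thesis unfolding wsample_def W_def[symmetric] f_def[symmetric]
    using pmf_embed_pmf[OF nn prob] by (simp add: f_def)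
qed

lemma wsample_set:
  assumes "finite B" "B \<noteq> {}" "\<forall>j\<in>B. x j > 0"
  shows "set_pmf (wsample x B) \<subseteq> B"
  using wsample_pmf[OF assms] by (auto simp: set_pmf_iff split: if_splits)

lemma wswor_supp:
  assumes fA: "finite A" and pA: "\<forall>j\<in>A. x j > 0"
  shows "m \<le> card A \<Longrightarrow> S \<in> set_pmf (wswor x A m) \<Longrightarrow> S \<subseteq> A \<and> card S = m"
proof (induction m arbitrary: S)
  case 0 then show ?case by simp
next
  case (Suc m)
  from Suc.prems(2) obtain S' j where S': "S' \<in> set_pmf (wswor x A m)"
    and j: "j \<in> set_pmf (wsample x (A - S'))" and S: "S = insert j S'" by auto
  have IH: "S' \<subseteq> A \<and> card S' = m" using Suc.IH[OF _ S'] Suc.prems(1) by simp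
  have ne: "A - S' \<noteq> {}"
  proof
    assume "A - S' = {}" then have "A \<subseteq> S'" by blast
    then have "card A \<le> card S'" using IH fA by (intro card_mono) (auto intro: finite_subset)
    with IH Suc.prems(1) show False by simp
  qed
  have "j \<in> A - S'" using wsample_set[of "A - S'" x] fA ne pA j by auto
  moreover have "finite S'" using IH fA finite_subset by blast
  ultimately show ?case using IH S by auto
qed


context
  fixes x :: "nat \<Rightarrow> real" and I :: "nat set" and k :: nat
  assumes finI: "finite I" and pos: "\<forall>i\<in>I. x i > 0" and k1: "k \<ge> 1"
begin

definition "R0 = (SOME R. is_top x I k R)"
definition "tlv = tail_l1 x I k"
definition "TT = {i\<in>I. (1 / real k) * tlv \<le> x i}"

lemma R0_top: "is_top x I k R0"
  unfolding R0_def using top_exists[OF finI] by (rule someI_ex)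

lemma R0_sub: "R0 \<subseteq> I" and R0_card: "card R0 \<le> k"
  using R0_top by (auto simp: is_top_def)

lemma fin_R0: "finite R0" using R0_sub finI finite_subset by blast

lemma tlv_eq: "tlv = (\<Sum>i\<in>I - R0. x i)"
  unfolding tlv_def tail_l1_def R0_def[symmetric] using pos by (intro sum.cong) auto

lemma tlv_nonneg: "tlv \<ge> 0" unfolding tlv_eq using pos by (intro sum_nonneg) auto

lemma TT_le: "i \<in> TT \<Longrightarrow> tlv \<le> real k * x i"
  using k1 by (auto simp: TT_def field_simps)

lemma TT_sub: "TT \<subseteq> I" by (auto simp: TT_def)

lemma tlv_zero: "tlv = 0 \<Longrightarrow> I - R0 = {}"
proof (rule ccontr)
  assume "tlv = 0" "I - R0 \<noteq> {}"
  then obtain j where j: "j \<in> I - R0" by blast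
  have "x j \<le> (\<Sum>i\<in>I - R0. x i)" using j finI pos by (intro member_le_sum) auto
  have "0 < (\<Sum>i\<in>I - R0. x i)" using finI pos j by (intro sum_pos) auto
  with \<open>tlv = 0\<close> show False unfolding tlv_eq by simp
qed

lemma card_TT: "card TT \<le> 2 * k"
proof -
  have "TT \<subseteq> R0 \<union> (TT - R0)" by blast
  then have "card TT \<le> card (R0 \<union> (TT - R0))"
    by (rule card_mono[rotated]) (use fin_R0 finI TT_sub in \<open>auto intro: finite_subset\<close>)
  also have "\<dots> \<le> card R0 + card (TT - R0)" by (rule card_Un_le)
  finally have "card TT \<le> card R0 + card (TT - R0)" .
  moreover have "card (TT - R0) \<le> k"
  proof (cases "tlv = 0")
    case True
    then have "TT - R0 = {}" using tlv_zero TT_sub by blast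
    then show ?thesis by (metis card.empty zero_le)
  next
    case False
    then have tlp: "tlv > 0" using tlv_nonneg by simp
    have fT: "finite (TT - R0)" using finI TT_sub finite_subset by blast
    have "real (card (TT - R0)) * (tlv / real k) = (\<Sum>i\<in>TT - R0. tlv / real k)" by simp
    also have "\<dots> \<le> (\<Sum>i\<in>TT - R0. x i)"
      using k1 by (intro sum_mono) (auto simp: TT_def field_simps)
    also have "\<dots> \<le> (\<Sum>i\<in>I - R0. x i)"
      using finI TT_sub pos by (intro sum_mono2) auto
    also have "\<dots> = tlv" by (simp add: tlv_eq)
    finally have "real (card (TT - R0)) * (tlv / real k) \<le> tlv" .
    then have "real (card (TT - R0)) * tlv \<le> real k * tlv" using k1 by (simp add: field_simps)
    then have "real (card (TT - R0)) \<le> real k" using tlp by simp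
    then show ?thesis by simp
  qed
  ultimately show ?thesis using R0_card by simp
qed

lemma TT_top:
  assumes SI: "S \<subseteq> I" and TS: "TT \<subseteq> S" and R: "is_top x S (min (card S) (2 * k)) R"
    and i: "i \<in> TT"
  shows "i \<in> R"
proof (rule ccontr)
  assume iR: "i \<notin> R"
  have fS: "finite S" using SI finI finite_subset by blast
  have RS: "R \<subseteq> S" and cR: "card R = min (card S) (2 * k)"
    and ord: "\<forall>a\<in>R. \<forall>b\<in>S - R. \<bar>x b\<bar> \<le> \<bar>x a\<bar>" using R by (auto simp: is_top_def)
  have iS: "i \<in> S" using i TS by blast
  have fR: "finite R" using RS fS finite_subset by blast
  have cR2: "card R = 2 * k"
  proof (rule ccontr)
    assume "card R \<noteq> 2 * k"
    then have "card R = card S" using cR by simp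
    then have "R = S" using RS fS card_subset_eq by blast
    with iR iS show False by blast
  qed
  have big: "\<forall>a\<in>insert i R. x i \<le> x a"
  proof
    fix a assume a: "a \<in> insert i R"
    show "x i \<le> x a"
    proof (cases "a = i")
      case False
      then have "a \<in> R" using a by simp
      then have "\<bar>x i\<bar> \<le> \<bar>x a\<bar>" using ord iS iR by blast
      moreover have "a \<in> I" using \<open>a \<in> R\<close> RS SI by blast
      ultimately show ?thesis using pos iS SI by auto
    qed simp
  qed
  define U where "U = insert i R"
  have UI: "U \<subseteq> I" using RS SI iS by (auto simp: U_def)
  have fU: "finite U" using fR by (simp add: U_def)
  have cU: "card U = 2 * k + 1" using fR iR cR2 by (simp add: U_def)
  have "U = (U \<inter> R0) \<union> (U - R0)" by blast
  then have "card U \<le> card (U \<inter> R0) + card (U - R0)"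
    using card_Un_le[of "U \<inter> R0" "U - R0"] by simp
  moreover have "card (U \<inter> R0) \<le> k" using R0_card fin_R0 card_mono[of R0 "U \<inter> R0"] by auto
  ultimately have cUR: "card (U - R0) \<ge> k + 1" using cU by linarith
  have "real (k + 1) * (tlv / real k) \<le> real (card (U - R0)) * (tlv / real k)"
    using cUR tlv_nonneg k1 by (intro mult_right_mono) auto
  also have "\<dots> = (\<Sum>a\<in>U - R0. tlv / real k)" by simp
  also have "\<dots> \<le> (\<Sum>a\<in>U - R0. x a)"
  proof (intro sum_mono)
    fix a assume "a \<in> U - R0"
    then have "x i \<le> x a" using big by (auto simp: U_def)
    moreover have "tlv / real k \<le> x i" using TT_le[OF i] k1 by (simp add: field_simps)
    ultimately show "tlv / real k \<le> x a" by linarith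
  qed
  also have "\<dots> \<le> (\<Sum>a\<in>I - R0. x a)"
    using finI UI pos by (intro sum_mono2) auto
  also have "\<dots> = tlv" by (simp add: tlv_eq)
  finally have "real (k + 1) * (tlv / real k) \<le> tlv" .
  then have "real (k + 1) * tlv \<le> real k * tlv" using k1 by (simp add: field_simps)
  then have "tlv = 0" using tlv_nonneg by (simp add: algebra_simps)
  then have "I - R0 = {}" by (rule tlv_zero)
  then have "U - R0 = {}" using UI by blast
  with cUR show False by simp
qed

lemma light:
  assumes i: "i \<in> TT"
  shows "(\<Sum>j\<in>{j\<in>I. x j < x i}. x j) \<le> 2 * real k * x i"
proof -
  let ?L = "{j\<in>I. x j < x i}"
  have fL: "finite ?L" using finI by simp
  have "(\<Sum>j\<in>?L. x j) = (\<Sum>j\<in>?L \<inter> R0. x j) + (\<Sum>j\<in>?L - R0. x j)"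
    by (rule sum.Int_Diff[OF fL])
  also have "(\<Sum>j\<in>?L \<inter> R0. x j) \<le> (\<Sum>j\<in>?L \<inter> R0. x i)"
    by (intro sum_mono) auto
  also have "\<dots> = real (card (?L \<inter> R0)) * x i" by simp
  also have "\<dots> \<le> real k * x i"
  proof -
    have "card (?L \<inter> R0) \<le> k" using R0_card fin_R0 card_mono[of R0 "?L \<inter> R0"] by auto
    moreover have "x i > 0" using i pos TT_sub by blast
    ultimately show ?thesis by (intro mult_right_mono) auto
  qed
  also have "(\<Sum>j\<in>?L - R0. x j) \<le> (\<Sum>j\<in>I - R0. x j)"
    using finI pos by (intro sum_mono2) auto
  also have "\<dots> \<le> real k * x i" using TT_le[OF i] tlv_eq by simp
  finally show ?thesis by simp
qed

definition "GG i = {j\<in>I. j \<noteq> i \<and> x i \<le> x j}"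

lemma GG_card: assumes i: "i \<in> TT" shows "card (GG i) + 1 \<le> 2 * k"
proof -
  have "GG i \<subseteq> TT - {i}"
  proof
    fix j assume "j \<in> GG i"
    then have j: "j \<in> I" "j \<noteq> i" "x i \<le> x j" by (auto simp: GG_def)
    have "(1 / real k) * tlv \<le> x i" using i by (simp add: TT_def)
    with j show "j \<in> TT - {i}" by (auto simp: TT_def)
  qed
  then have "card (GG i) \<le> card (TT - {i})"
    using finI TT_sub by (intro card_mono) (auto intro: finite_subset)
  also have "\<dots> = card TT - 1" using i by simp
  moreover have "card TT \<ge> 1" using i finI TT_sub
    by (metis One_nat_def Suc_leI card_gt_0_iff empty_iff finite_subset)
  ultimately show ?thesis using card_TT by linarith
qed

lemma finGG: "finite (GG i)" using finI by (simp add: GG_def)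

definition "psi i S = (if i \<in> S then 0 else real (card (GG i - S)) + 1)"

definition "eta = 1 / (4 * real k + 2)"

lemma psi_nonneg: "psi i S \<ge> 0" by (simp add: psi_def)

lemma step_real:
  assumes i: "i \<in> TT" and iS: "i \<notin> S"
  shows "(\<Sum>j\<in>I - S. psi i (insert j S) * x j) \<le> (1 - eta) * psi i S * (\<Sum>j\<in>I - S. x j)"
proof -
  define B where "B = I - S"
  define G where "G = GG i"
  define a where "a = card (G - S)"
  have iI: "i \<in> I" using i TT_sub by blast
  have iB: "i \<in> B" using iI iS by (simp add: B_def)
  have fB: "finite B" using finI by (simp add: B_def)
  have fG: "finite G" using finGG by (simp add: G_def)
  have iG: "i \<notin> G" by (simp add: G_def GG_def)
  have xi: "x i > 0" using pos iI by blast
  have psiS: "psi i S = real a + 1" using iS by (simp add: psi_def a_def G_def)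
  have aG: "a \<le> card G" unfolding a_def using fG by (intro card_mono) auto
  have a2k: "real a + 1 \<le> 2 * real k" using GG_card[OF i] aG unfolding G_def by linarith
  have psij: "psi i (insert j S) * x j
      = (real a + 1) * x j - (if j = i then (real a + 1) * x i else 0) - (if j \<in> G then x j else 0)"
    if j: "j \<in> B" for j
  proof (cases "j = i")
    case True then show ?thesis using iG by (simp add: psi_def)
  next
    case False
    then have nS: "i \<notin> insert j S" using iS by simp
    have jS: "j \<notin> S" using j by (simp add: B_def)
    show ?thesis
    proof (cases "j \<in> G")
      case True
      have "G - insert j S = (G - S) - {j}" by blast
      moreover have "j \<in> G - S" using True jS by blast
      ultimately have "card (G - insert j S) = a - 1" using fG by (simp add: a_def)
      moreover have "a \<ge> 1" using \<open>j \<in> G - S\<close> fG unfolding a_def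
        by (metis One_nat_def Suc_leI card_gt_0_iff empty_iff finite_Diff)
      ultimately have "real (card (G - insert j S)) = real a - 1" by simp
      then show ?thesis using nS False True unfolding psi_def G_def[symmetric]
        by (simp add: algebra_simps)
    next
      case False
      have "G - insert j S = G - S" using False by blast
      then show ?thesis using nS \<open>j \<noteq> i\<close> False unfolding psi_def G_def[symmetric]
        by (simp add: a_def)
    qed
  qed
  define W where "W = (\<Sum>j\<in>B. x j)"
  define g where "g = (\<Sum>j\<in>B \<inter> G. x j)"
  define r where "r = (\<Sum>j\<in>B - G - {i}. x j)"
  have sumL: "(\<Sum>j\<in>B. psi i (insert j S) * x j) = (real a + 1) * W - (real a + 1) * x i - g"
  proof -
    have "(\<Sum>j\<in>B. psi i (insert j S) * x j)
       = (\<Sum>j\<in>B. (real a + 1) * x j - (if j = i then (real a + 1) * x i else 0) - (if j \<in> G then x j else 0))"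
      using psij by (rule sum.cong[OF refl])
    also have "\<dots> = (\<Sum>j\<in>B. (real a + 1) * x j) - (\<Sum>j\<in>B. (if j = i then (real a + 1) * x i else 0))
        - (\<Sum>j\<in>B. (if j \<in> G then x j else 0))"
      by (simp add: sum_subtractf)
    also have "(\<Sum>j\<in>B. (if j = i then (real a + 1) * x i else 0)) = (real a + 1) * x i"
      using fB iB by (simp add: sum.delta)
    also have "(\<Sum>j\<in>B. (if j \<in> G then x j else 0)) = g"
      unfolding g_def using fB by (simp add: sum.inter_restrict Int_commute)
    finally show ?thesis by (simp add: W_def sum_distrib_left)
  qed
  have Wsplit: "W = x i + g + r"
  proof -
    have "W = g + (\<Sum>j\<in>B - G. x j)" unfolding W_def g_def by (rule sum.Int_Diff[OF fB])
    also have "(\<Sum>j\<in>B - G. x j) = x i + r" unfolding r_def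
      using fB iB iG by (subst sum.remove[of _ i]) auto
    finally show ?thesis by simp
  qed
  have gnn: "g \<ge> 0" unfolding g_def using pos by (intro sum_nonneg) (auto simp: B_def)
  have rle: "r \<le> 2 * real k * x i"
  proof -
    have "r \<le> (\<Sum>j\<in>{j\<in>I. x j < x i}. x j)" unfolding r_def
    proof (intro sum_mono2)
      show "finite {j\<in>I. x j < x i}" using finI by simp
      show "B - G - {i} \<subseteq> {j\<in>I. x j < x i}" by (auto simp: B_def G_def GG_def)
      show "\<And>b. b \<in> {j\<in>I. x j < x i} - (B - G - {i}) \<Longrightarrow> 0 \<le> x b" using pos by auto
    qed
    also have "\<dots> \<le> 2 * real k * x i" by (rule light[OF i])
    finally show ?thesis .
  qed
  have rnn: "r \<ge> 0" unfolding r_def using pos by (intro sum_nonneg) (auto simp: B_def)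
  have kpos: "real k \<ge> 1" using k1 by simp
  have e1: "eta * (real a + 1) \<le> 1 / 2"
    using a2k kpos by (simp add: eta_def field_simps)
  have e2: "eta * (real a + 1) * (x i + r) \<le> (real a + 1) * x i / 2"
  proof -
    have "x i + r \<le> (2 * real k + 1) * x i" using rle by (simp add: algebra_simps)
    then have "eta * (real a + 1) * (x i + r) \<le> eta * (real a + 1) * ((2 * real k + 1) * x i)"
      by (intro mult_left_mono) (auto simp: eta_def)
    also have "\<dots> = (real a + 1) * x i / 2" using kpos by (simp add: eta_def field_simps)
    finally show ?thesis .
  qed
  have e3: "eta * (real a + 1) * g \<le> 1 / 2 * g" using mult_right_mono[OF e1 gnn] .
  have dist: "eta * (real a + 1) * W = eta * (real a + 1) * (x i + r) + eta * (real a + 1) * g"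
    using Wsplit by (simp add: algebra_simps)
  have "0 \<le> (real a + 1) * x i" using xi by simp
  then have key: "eta * (real a + 1) * W \<le> (real a + 1) * x i + g"
    using e2 e3 gnn dist by linarith
  have "(\<Sum>j\<in>B. psi i (insert j S) * x j) \<le> (1 - eta) * (real a + 1) * W"
    using sumL key by (simp add: algebra_simps)
  then show ?thesis by (simp add: psiS B_def W_def)
qed


lemma eta_bounds: "0 < eta" "eta \<le> 1" using k1 by (auto simp: eta_def field_simps)

lemma step_enn:
  assumes i: "i \<in> TT"
  shows "(\<integral>\<^sup>+j. ennreal (psi i (insert j S)) \<partial>wsample x (I - S)) \<le> ennreal ((1 - eta) * psi i S)"
proof (cases "i \<in> S")
  case True
  then have "\<And>j. psi i (insert j S) = 0" by (simp add: psi_def)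
  then show ?thesis by simp
next
  case False
  have iI: "i \<in> I" using i TT_sub by blast
  define B where "B = I - S"
  have fB: "finite B" using finI by (simp add: B_def)
  have neB: "B \<noteq> {}" using iI False by (auto simp: B_def)
  have pB: "\<forall>j\<in>B. x j > 0" using pos by (auto simp: B_def)
  define W where "W = (\<Sum>j\<in>B. x j)"
  have Wp: "W > 0" unfolding W_def using fB neB pB by (intro sum_pos) auto
  have "(\<integral>\<^sup>+j. ennreal (psi i (insert j S)) \<partial>wsample x B)
      = (\<Sum>j\<in>B. ennreal (psi i (insert j S)) * pmf (wsample x B) j)"
    using fB wsample_set[OF fB neB pB] by (intro nn_integral_measure_pmf_support) auto
  also have "\<dots> = (\<Sum>j\<in>B. ennreal (psi i (insert j S) * (x j / W)))"
  proof (intro sum.cong refl)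
    fix j assume j: "j \<in> B"
    have pj: "pmf (wsample x B) j = x j / W" using wsample_pmf[OF fB neB pB] j by (simp add: W_def)
    have xw: "x j / W \<ge> 0" using pB j Wp by (auto intro!: divide_nonneg_pos less_imp_le)
    show "ennreal (psi i (insert j S)) * pmf (wsample x B) j = ennreal (psi i (insert j S) * (x j / W))"
      unfolding pj using ennreal_mult[OF psi_nonneg xw, of i "insert j S"] by simp
  qed
  also have "\<dots> = ennreal (\<Sum>j\<in>B. psi i (insert j S) * (x j / W))"
    using pB Wp psi_nonneg by (intro sum_ennreal) auto
  also have "(\<Sum>j\<in>B. psi i (insert j S) * (x j / W)) = (\<Sum>j\<in>B. psi i (insert j S) * x j) / W"
    by (simp add: sum_divide_distrib)
  also have "\<dots> \<le> (1 - eta) * psi i S"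
    using step_real[OF i False] Wp by (simp add: B_def W_def divide_le_eq)
  finally show ?thesis by (simp add: B_def ennreal_leI)
qed

lemma expect_bound:
  assumes i: "i \<in> TT"
  shows "(\<integral>\<^sup>+S. ennreal (psi i S) \<partial>wswor x I m) \<le> ennreal ((1 - eta) ^ m * psi i {})"
proof (induction m)
  case 0 then show ?case by (simp add: psi_nonneg)
next
  case (Suc m)
  have "(\<integral>\<^sup>+S. ennreal (psi i S) \<partial>wswor x I (Suc m))
      = (\<integral>\<^sup>+S. (\<integral>\<^sup>+j. ennreal (psi i (insert j S)) \<partial>wsample x (I - S)) \<partial>wswor x I m)"
    by simp
  also have "\<dots> \<le> (\<integral>\<^sup>+S. ennreal (1 - eta) * ennreal (psi i S) \<partial>wswor x I m)"
    using step_enn[OF i] eta_bounds psi_nonneg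
    by (intro nn_integral_mono) (simp add: ennreal_mult)
  also have "\<dots> = ennreal (1 - eta) * (\<integral>\<^sup>+S. ennreal (psi i S) \<partial>wswor x I m)"
    by (rule nn_integral_cmult) simp
  also have "\<dots> \<le> ennreal (1 - eta) * ennreal ((1 - eta) ^ m * psi i {})"
    by (intro mult_left_mono Suc.IH) simp
  also have "\<dots> = ennreal ((1 - eta) ^ Suc m * psi i {})"
    using eta_bounds psi_nonneg by (simp add: ennreal_mult[symmetric] mult.assoc)
  finally show ?case .
qed

lemma miss_bound:
  assumes i: "i \<in> TT"
  shows "measure_pmf.prob (wswor x I m) {S. i \<notin> S} \<le> (1 - eta) ^ m * (2 * real k)"
proof -
  have "ennreal (measure_pmf.prob (wswor x I m) {S. i \<notin> S}) = emeasure (wswor x I m) {S. i \<notin> S}"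
    by (simp add: measure_pmf.emeasure_eq_measure)
  also have "\<dots> = (\<integral>\<^sup>+S. indicator {S. i \<notin> S} S \<partial>wswor x I m)" by simp
  also have "\<dots> \<le> (\<integral>\<^sup>+S. ennreal (psi i S) \<partial>wswor x I m)"
    by (intro nn_integral_mono) (auto simp: psi_def split: split_indicator)
  also have "\<dots> \<le> ennreal ((1 - eta) ^ m * psi i {})" by (rule expect_bound[OF i])
  also have "\<dots> \<le> ennreal ((1 - eta) ^ m * (2 * real k))"
  proof (intro ennreal_leI mult_left_mono)
    show "psi i {} \<le> 2 * real k" using GG_card[OF i] by (simp add: psi_def)
    show "0 \<le> (1 - eta) ^ m" using eta_bounds by simp
  qed
  finally show ?thesis using eta_bounds k1 by (simp add: ennreal_le_iff)
qed

end

lemma numeric: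
  fixes k s :: nat and \<delta> :: real
  assumes k2: "k \<ge> 2" and d0: "0 < \<delta>" and d1: "\<delta> < 1/2"
    and sge: "real s \<ge> 15 * real k * ln (real k / \<delta>)"
  shows "(2 * real k) * ((1 - 1 / (4 * real k + 2)) ^ s * (2 * real k)) \<le> \<delta>"
proof -
  define \<eta> where "\<eta> = 1 / (4 * real k + 2)"
  define L where "L = ln (real k / \<delta>)"
  have kr: "real k \<ge> 2" using k2 by simp
  have eta0: "0 < \<eta>" "\<eta> \<le> 1" using kr by (auto simp: \<eta>_def field_simps)
  have kd: "real k / \<delta> > 1" using kr d0 d1 by (simp add: field_simps)
  have L0: "L > 0" unfolding L_def using kd by simp
  have h1: "(1 - \<eta>) ^ s \<le> exp (- \<eta>) ^ s"
    using eta0 exp_ge_add_one_self[of "- \<eta>"] by (intro power_mono) auto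
  have h2: "exp (- \<eta>) ^ s = exp (real s * (- \<eta>))" using exp_of_nat_mult[of s "- \<eta>"] by simp
  have "real s \<ge> 3 * (4 * real k + 2) * L"
  proof -
    have "3 * (4 * real k + 2) * L \<le> 15 * real k * L" using kr L0 by (intro mult_right_mono) auto
    then show ?thesis using sge by (simp add: L_def)
  qed
  then have h3: "real s * \<eta> \<ge> 3 * L" using kr by (simp add: \<eta>_def field_simps)
  have h4: "exp (real s * (- \<eta>)) \<le> exp (- (3 * L))" using h3 by simp
  have "exp (3 * L) = exp L ^ 3" using exp_of_nat_mult[of 3 L] by simp
  also have "\<dots> = (real k / \<delta>) ^ 3" unfolding L_def using kd by simp
  finally have h5: "exp (- (3 * L)) = (\<delta> / real k) ^ 3" by (simp add: exp_minus power_divide)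
  have pw: "(1 - \<eta>) ^ s \<le> (\<delta> / real k) ^ 3" using h1 h2 h4 h5 by simp
  have "(2 * real k) * ((1 - \<eta>) ^ s * (2 * real k)) = 4 * real k ^ 2 * (1 - \<eta>) ^ s"
    by (simp add: power2_eq_square)
  also have "\<dots> \<le> 4 * real k ^ 2 * (\<delta> / real k) ^ 3" using pw by (intro mult_left_mono) auto
  also have "\<dots> = \<delta> * (4 * \<delta> ^ 2 / real k)" using kr by (simp add: field_simps power2_eq_square power3_eq_cube)
  also have "\<dots> \<le> \<delta> * 1"
  proof (intro mult_left_mono)
    have "\<delta> * \<delta> \<le> 1/2 * (1/2)" using d0 d1 by (intro mult_mono) auto
    then have "4 * \<delta> ^ 2 \<le> 1" by (simp add: power2_eq_square)
    then show "4 * \<delta> ^ 2 / real k \<le> 1" using kr by (simp add: divide_le_eq)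
  qed (use d0 in simp)
  finally show ?thesis by (simp add: \<eta>_def)
qed

theorem mainTheorem6:
  shows "\<exists>C::real > 0. \<forall>(\<epsilon>::real) (k::nat) (\<delta>::real) (s::nat) (t::nat) (x::nat \<Rightarrow> real).
    0 < \<epsilon> \<and> \<epsilon> \<le> 1/2 \<and> real k = 1 / \<epsilon> \<and> 0 < \<delta> \<and> \<delta> < 1/2 \<and>
    real s \<ge> C / \<epsilon> * ln (1 / (\<epsilon> * \<delta>)) \<and> t \<ge> 1 \<and> (\<forall>i\<in>{1..t}. x i > 0)
    \<longrightarrow>
    (let T = {i\<in>{1..t}. x i \<ge> \<epsilon> * tail_l1 x {1..t} k};
         P = wswor x {1..t} (min t s)
     in real (card T) \<le> 2 / \<epsilon>
      \<and> measure_pmf.prob P {S. T \<subseteq> S} \<ge> 1 - \<delta>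
      \<and> (\<forall>S\<in>set_pmf P. T \<subseteq> S \<longrightarrow>
            (\<forall>R. is_top x S (min (card S) (2 * k)) R \<longrightarrow> T \<subseteq> R)))"
proof (rule exI[of _ 15], intro conjI allI impI)
  show "(15::real) > 0" by simp
  fix \<epsilon> :: real and k :: nat and \<delta> :: real and s t :: nat and x :: "nat \<Rightarrow> real"
  assume H: "0 < \<epsilon> \<and> \<epsilon> \<le> 1/2 \<and> real k = 1 / \<epsilon> \<and> 0 < \<delta> \<and> \<delta> < 1/2 \<and>
    real s \<ge> 15 / \<epsilon> * ln (1 / (\<epsilon> * \<delta>)) \<and> t \<ge> 1 \<and> (\<forall>i\<in>{1..t}. x i > 0)"
  then have e0: "0 < \<epsilon>" and e1: "\<epsilon> \<le> 1/2" and ke: "real k = 1 / \<epsilon>" and d0: "0 < \<delta>"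
    and d1: "\<delta> < 1/2" and sge: "real s \<ge> 15 / \<epsilon> * ln (1 / (\<epsilon> * \<delta>))"
    and pos: "\<forall>i\<in>{1..t}. x i > 0" by auto
  have eps: "\<epsilon> = 1 / real k" using ke e0 by simp
  have "1 / \<epsilon> \<ge> 2" using e0 e1 by (simp add: field_simps)
  then have kr: "real k \<ge> 2" using ke by simp
  then have k2: "k \<ge> 2" by simp
  then have k1: "k \<ge> 1" by simp
  define I where "I = {1..t}"
  have finI: "finite I" by (simp add: I_def)
  have posI: "\<forall>i\<in>I. 0 < x i" using pos by (simp add: I_def)
  have Teq: "{i\<in>{1..t}. x i \<ge> \<epsilon> * tail_l1 x {1..t} k} = TT x I k"
    using finI posI k1 by (simp add: TT_def tlv_def I_def eps)
  have s2: "real s \<ge> 15 * real k * ln (real k / \<delta>)"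
    using sge e0 by (simp add: eps)
  define P where "P = wswor x I (min t s)"
  have cardI: "card I = t" by (simp add: I_def)
  have supp: "S \<subseteq> I \<and> card S = min t s" if "S \<in> set_pmf P" for S
    using wswor_supp[OF finI posI, of "min t s" S] cardI that unfolding P_def by simp
  have c1: "real (card (TT x I k)) \<le> 2 / \<epsilon>"
    using card_TT[OF finI posI k1] eps by simp
  have c3: "\<forall>S\<in>set_pmf P. TT x I k \<subseteq> S \<longrightarrow>
            (\<forall>R. is_top x S (min (card S) (2 * k)) R \<longrightarrow> TT x I k \<subseteq> R)"
  proof (intro ballI impI allI subsetI)
    fix S R i assume S: "S \<in> set_pmf P" and TS: "TT x I k \<subseteq> S"
      and R: "is_top x S (min (card S) (2 * k)) R" and i: "i \<in> TT x I k"
    have SI: "S \<subseteq> I" using supp[OF S] by simp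
    show "i \<in> R" by (rule TT_top[OF finI posI k1 SI TS R i])
  qed
  have sub: "measure_pmf.prob P {S. \<not> TT x I k \<subseteq> S} \<le> (\<Sum>i\<in>TT x I k. measure_pmf.prob P {S. i \<notin> S})"
  proof -
    have "{S. \<not> TT x I k \<subseteq> S} = (\<Union>i\<in>TT x I k. {S. i \<notin> S})" by blast
    moreover have "finite (TT x I k)" using finI TT_sub[OF finI posI k1] finite_subset by blast
    ultimately show ?thesis
      by (simp add: measure_pmf.finite_measure_subadditive_finite)
  qed
  have bnd: "(\<Sum>i\<in>TT x I k. measure_pmf.prob P {S. i \<notin> S}) \<le> \<delta>"
  proof (cases "t \<le> s")
    case True
    have "measure_pmf.prob P {S. i \<notin> S} = 0" if i: "i \<in> TT x I k" for i
    proof -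
      have allin: "i \<in> S" if S: "S \<in> set_pmf P" for S
      proof -
        have SsI: "S \<subseteq> I" and cS: "card S = t" using supp[OF S] True by auto
        have SI: "S = I" using card_subset_eq[OF finI SsI] cardI cS by simp
        have "i \<in> I" using i TT_sub[OF finI posI k1] by blast
        with SI show ?thesis by simp
      qed
      have "set_pmf P \<inter> {S. i \<notin> S} = {}" using allin by blast
      then show ?thesis by (simp add: measure_pmf_zero_iff)
    qed
    then show ?thesis using d0 by simp
  next
    case False
    then have ms: "min t s = s" by simp
    have "(\<Sum>i\<in>TT x I k. measure_pmf.prob P {S. i \<notin> S})
        \<le> (\<Sum>i\<in>TT x I k. (1 - eta k) ^ s * (2 * real k))"
    proof (rule sum_mono)
      fix i assume i: "i \<in> TT x I k"
      show "measure_pmf.prob P {S. i \<notin> S} \<le> (1 - eta k) ^ s * (2 * real k)"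
        unfolding P_def ms by (rule miss_bound[OF finI posI k1 i])
    qed
    also have "\<dots> = real (card (TT x I k)) * ((1 - eta k) ^ s * (2 * real k))" by simp
    also have "\<dots> \<le> (2 * real k) * ((1 - eta k) ^ s * (2 * real k))"
    proof (intro mult_right_mono)
      show "real (card (TT x I k)) \<le> 2 * real k" using card_TT[OF finI posI k1] by simp
      have "eta k \<le> 1" using kr by (simp add: eta_def[OF finI posI k1] field_simps)
      then show "0 \<le> (1 - eta k) ^ s * (2 * real k)" by simp
    qed
    also have "\<dots> \<le> \<delta>" using numeric[OF k2 d0 d1 s2] by (simp add: eta_def[OF finI posI k1])
    finally show ?thesis .
  qed
  have P': "wswor x {1..t} (min t s) = P" by (simp add: P_def I_def)
  have c2: "measure_pmf.prob P {S. TT x I k \<subseteq> S} \<ge> 1 - \<delta>"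
  proof -
    have "measure_pmf.prob P {S. TT x I k \<subseteq> S} = 1 - measure_pmf.prob P (UNIV - {S. TT x I k \<subseteq> S})"
      using measure_pmf.prob_compl[of "{S. TT x I k \<subseteq> S}" P] by simp
    also have "UNIV - {S. TT x I k \<subseteq> S} = {S. \<not> TT x I k \<subseteq> S}" by blast
    finally have eq: "measure_pmf.prob P {S. TT x I k \<subseteq> S} = 1 - measure_pmf.prob P {S. \<not> TT x I k \<subseteq> S}" .
    show ?thesis using eq sub bnd by linarith
  qed
  show "let T = {i\<in>{1..t}. x i \<ge> \<epsilon> * tail_l1 x {1..t} k};
         P = wswor x {1..t} (min t s)
     in real (card T) \<le> 2 / \<epsilon>
      \<and> measure_pmf.prob P {S. T \<subseteq> S} \<ge> 1 - \<delta>
      \<and> (\<forall>S\<in>set_pmf P. T \<subseteq> S \<longrightarrow>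
            (\<forall>R. is_top x S (min (card S) (2 * k)) R \<longrightarrow> T \<subseteq> R))"
    unfolding Let_def Teq P' by (intro conjI c1 c2 c3)
qed

end
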